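(* Let $f:\mathbb{R}^d\times\mathcal{X}\to\mathbb{R}$ be differentiable in $\theta$, with $\mathcal{X}$ a subset of a Euclidean space and $\sup_{x\in\mathcal{X}}\Vert x\Vert\le D<\infty$. Assume (A1): there are $K_1,K_2>0$ with $\Vert\nabla f(\theta,x)-\nabla f(\hat\theta,\hat x)\Vert\le K_1\Vert\theta-\hat\theta\Vert+K_2\Vert x-\hat x\Vert(\Vert\theta\Vert+\Vert\hat\theta\Vert+1)$ for all $\theta,\hat\theta\in\mathbb{R}^d$, $x,\hat x\in\mathcal{X}$; and (N): $(\xi_k)$ are i.i.d. random vectors in $\mathbb{R}^d$ independent of the minibatches, with continuous everywhere-positive density, $\mathbb{E}\xi_1=0$, $\sigma^2:=\mathbb{E}\Vert\xi_1\Vert^2<\infty$. Let $X_n=(x_1,\dots,x_n)$, $\hat X_n=(\hat x_1,\dots,\hat x_n)\in\mathcal{X}^n$ differ in at most one index, $b\in\{1,\dots,n\}$, $\eta>0$, $(\Omega_k)$ i.i.d. uniformly random $b$-subsets of $\{1,\dots,n\}$, and let $P,\hat P$ be the transition kernels of $\theta_k=\theta_{k-1}-\frac\eta b\sum_{i\in\Omega_k}\nabla f(\theta_{k-1},x_i)+\eta\xi_k$ and $\hat\theta_k=\hat\theta_{k-1}-\frac\eta b\sum_{i\in\Omega_k}\nabla f(\hat\theta_{k-1},\hat x_i)+\eta\xi_k$. Let $\theta_*$ and $\hat\theta_*$ be minimizers of $\frac1n\sum_if(\theta,x_i)$ and $\frac1n\sum_if(\theta,\hat x_i)$, $V(\theta)=1+\Vert\theta-\theta_*\Vert^2$,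 $\hat V(\theta)=1+\Vert\theta-\hat\theta_*\Vert^2$, and for $\psi>0$ let $d_\psi(\mu_1,\mu_2)=\int_{\mathbb{R}^d}(1+\psi V(\theta))\,|\mu_1-\mu_2|(d\theta)$. Then $$\sup_{\theta\in\mathbb{R}^d}\frac{d_\psi(\delta_\theta P,\delta_\theta\hat P)}{\hat V(\theta)}\le\frac{2b}{n}\max\Big\{\psi(4+8\eta^2K_1^2),\ 1+\psi\Big(1+\eta^2\sigma^2+(4+8\eta^2K_1^2)\Vert\theta_*-\hat\theta_*\Vert^2+4\eta^2\sup_{x\in\mathcal{X}}\Vert\nabla f(\theta_*,x)\Vert^2\Big)\Big\}.$$
   Context: $|\mu_1-\mu_2|$ is the total variation measure of the signed measure $\mu_1-\mu_2$; $\delta_\theta P=P(\theta,\cdot)$. *)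

theory Defs
  imports "HOL-Probability.Probability"
begin

definition tv_measure :: "'a measure \<Rightarrow> 'a measure \<Rightarrow> 'a measure" where
  "tv_measure M1 M2 = measure_of (space M1) (sets M1)
     (\<lambda>A. \<Squnion>{(\<Sum>B\<in>\<P>. ennreal \<bar>measure M1 B - measure M2 B\<bar>) | \<P>.
            finite \<P> \<and> disjoint \<P> \<and> \<P> \<subseteq> sets M1 \<and> \<Union>\<P> = A})"

definition d_psi :: "real \<Rightarrow> ('a \<Rightarrow> real) \<Rightarrow> 'a measure \<Rightarrow> 'a measure \<Rightarrow> ennreal" where
  "d_psi \<psi> V M1 M2 = (\<integral>\<^sup>+ t. ennreal (1 + \<psi> * V t) \<partial>tv_measure M1 M2)"

definition minibatch_pmf :: "nat \<Rightarrow> nat \<Rightarrow> nat set pmf" where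
  "minibatch_pmf n b = pmf_of_set {S. S \<subseteq> {1..n} \<and> card S = b}"

definition sgld_kernel ::
  "nat \<Rightarrow> nat \<Rightarrow> real \<Rightarrow> ('a::euclidean_space \<Rightarrow> 'b \<Rightarrow> 'a) \<Rightarrow> (nat \<Rightarrow> 'b) \<Rightarrow> 'a measure
    \<Rightarrow> 'a \<Rightarrow> 'a measure" where
  "sgld_kernel n b \<eta> G X N \<theta> =
     distr (measure_pmf (minibatch_pmf n b) \<Otimes>\<^sub>M N) borel
       (\<lambda>(S, \<xi>). \<theta> - (\<eta> / real b) *\<^sub>R (\<Sum>i\<in>S. G \<theta> (X i)) + \<eta> *\<^sub>R \<xi>)"

end

theory Submission
  imports Defs
begin


lemma kernel_emeasure:
  fixes c :: "'i \<Rightarrow> 'a::euclidean_space"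
  assumes N: "prob_space N" "sets N = sets borel" and I: "finite I" "I \<noteq> {}"
    and B: "B \<in> sets borel"
  shows "emeasure (distr (measure_pmf (pmf_of_set I) \<Otimes>\<^sub>M N) borel (\<lambda>(S,\<xi>). c S + \<eta> *\<^sub>R \<xi>)) B
     = (\<Sum>S\<in>I. emeasure N {\<xi>. c S + \<eta> *\<^sub>R \<xi> \<in> B}) / card I"
proof -
  interpret prob_space N by fact
  have sp: "space N = UNIV" using sets_eq_imp_space_eq[OF N(2)] by simp
  have meas: "(\<lambda>(S,\<xi>). c S + \<eta> *\<^sub>R \<xi>) \<in> borel_measurable (measure_pmf (pmf_of_set I) \<Otimes>\<^sub>M N)"
  proof -
    have "(\<lambda>x. c (fst x)) \<in> borel_measurable (measure_pmf (pmf_of_set I) \<Otimes>\<^sub>M N)"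
      by (rule measurable_compose[OF measurable_fst]) simp
    moreover have "snd \<in> borel_measurable (measure_pmf (pmf_of_set I) \<Otimes>\<^sub>M N)"
      using measurable_snd[of "measure_pmf (pmf_of_set I)" N] unfolding measurable_cong_sets[OF refl N(2)] .
    ultimately show ?thesis unfolding case_prod_beta by (intro borel_measurable_add borel_measurable_scaleR) auto
  qed
  have "emeasure (distr (measure_pmf (pmf_of_set I) \<Otimes>\<^sub>M N) borel (\<lambda>(S,\<xi>). c S + \<eta> *\<^sub>R \<xi>)) B
     = emeasure (measure_pmf (pmf_of_set I) \<Otimes>\<^sub>M N) ((\<lambda>(S,\<xi>). c S + \<eta> *\<^sub>R \<xi>) -` B \<inter> space (measure_pmf (pmf_of_set I) \<Otimes>\<^sub>M N))"
    by (rule emeasure_distr[OF meas B])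
  also have "\<dots> = (\<integral>\<^sup>+S. emeasure N (Pair S -` ((\<lambda>(S,\<xi>). c S + \<eta> *\<^sub>R \<xi>) -` B \<inter> space (measure_pmf (pmf_of_set I) \<Otimes>\<^sub>M N))) \<partial>measure_pmf (pmf_of_set I))"
    by (rule emeasure_pair_measure_alt) (rule measurable_sets[OF meas B])
  also have "\<dots> = (\<integral>\<^sup>+S. emeasure N {\<xi>. c S + \<eta> *\<^sub>R \<xi> \<in> B} \<partial>measure_pmf (pmf_of_set I))"
    by (intro nn_integral_cong arg_cong[where f="emeasure N"]) (auto simp: space_pair_measure sp)
  also have "\<dots> = (\<Sum>S\<in>I. emeasure N {\<xi>. c S + \<eta> *\<^sub>R \<xi> \<in> B}) / card I"
    by (rule nn_integral_pmf_of_set[OF I(2,1)])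
  finally show ?thesis .
qed

lemma mix_emeasure:
  fixes c :: "'i \<Rightarrow> 'a::euclidean_space"
  assumes N: "prob_space N" "sets N = sets borel" and I: "finite I"
    and B: "B \<in> sets borel"
  shows "emeasure (distr (count_space I \<Otimes>\<^sub>M N) borel (\<lambda>(S,\<xi>). c S + \<eta> *\<^sub>R \<xi>)) B
     = (\<Sum>S\<in>I. emeasure N {\<xi>. c S + \<eta> *\<^sub>R \<xi> \<in> B})"
proof -
  interpret prob_space N by fact
  have sp: "space N = UNIV" using sets_eq_imp_space_eq[OF N(2)] by simp
  have meas: "(\<lambda>(S,\<xi>). c S + \<eta> *\<^sub>R \<xi>) \<in> borel_measurable (count_space I \<Otimes>\<^sub>M N)"
  proof -
    have "(\<lambda>x. c (fst x)) \<in> borel_measurable (count_space I \<Otimes>\<^sub>M N)"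
      by (rule measurable_compose[OF measurable_fst]) simp
    moreover have "snd \<in> borel_measurable (count_space I \<Otimes>\<^sub>M N)"
      using measurable_snd[of "count_space I" N] unfolding measurable_cong_sets[OF refl N(2)] .
    ultimately show ?thesis unfolding case_prod_beta by (intro borel_measurable_add borel_measurable_scaleR) auto
  qed
  have "emeasure (distr (count_space I \<Otimes>\<^sub>M N) borel (\<lambda>(S,\<xi>). c S + \<eta> *\<^sub>R \<xi>)) B
     = emeasure (count_space I \<Otimes>\<^sub>M N) ((\<lambda>(S,\<xi>). c S + \<eta> *\<^sub>R \<xi>) -` B \<inter> space (count_space I \<Otimes>\<^sub>M N))"
    by (rule emeasure_distr[OF meas B])
  also have "\<dots> = (\<integral>\<^sup>+S. emeasure N (Pair S -` ((\<lambda>(S,\<xi>). c S + \<eta> *\<^sub>R \<xi>) -` B \<inter> space (count_space I \<Otimes>\<^sub>M N))) \<partial>count_space I)"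
    by (rule emeasure_pair_measure_alt) (rule measurable_sets[OF meas B])
  also have "\<dots> = (\<integral>\<^sup>+S. emeasure N {\<xi>. c S + \<eta> *\<^sub>R \<xi> \<in> B} \<partial>count_space I)"
    by (intro nn_integral_cong arg_cong[where f="emeasure N"]) (auto simp: space_pair_measure sp)
  also have "\<dots> = (\<Sum>S\<in>I. emeasure N {\<xi>. c S + \<eta> *\<^sub>R \<xi> \<in> B})"
    by (rule nn_integral_count_space_finite[OF I])
  finally show ?thesis .
qed

lemma mix_nn_integral:
  fixes c :: "'i \<Rightarrow> 'a::euclidean_space"
  assumes N: "prob_space N" "sets N = sets borel" and I: "finite I"
    and h: "h \<in> borel_measurable borel"
  shows "(\<integral>\<^sup>+t. h t \<partial>distr (count_space I \<Otimes>\<^sub>M N) borel (\<lambda>(S,\<xi>). c S + \<eta> *\<^sub>R \<xi>))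
     = (\<Sum>S\<in>I. \<integral>\<^sup>+\<xi>. h (c S + \<eta> *\<^sub>R \<xi>) \<partial>N)"
proof -
  interpret prob_space N by fact
  have meas: "(\<lambda>(S,\<xi>). c S + \<eta> *\<^sub>R \<xi>) \<in> borel_measurable (count_space I \<Otimes>\<^sub>M N)"
  proof -
    have "(\<lambda>x. c (fst x)) \<in> borel_measurable (count_space I \<Otimes>\<^sub>M N)"
      by (rule measurable_compose[OF measurable_fst]) simp
    moreover have "snd \<in> borel_measurable (count_space I \<Otimes>\<^sub>M N)"
      using measurable_snd[of "count_space I" N] unfolding measurable_cong_sets[OF refl N(2)] .
    ultimately show ?thesis unfolding case_prod_beta by (intro borel_measurable_add borel_measurable_scaleR) auto
  qed
  have "(\<integral>\<^sup>+t. h t \<partial>distr (count_space I \<Otimes>\<^sub>M N) borel (\<lambda>(S,\<xi>). c S + \<eta> *\<^sub>R \<xi>))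
      = (\<integral>\<^sup>+x. h ((\<lambda>(S,\<xi>). c S + \<eta> *\<^sub>R \<xi>) x) \<partial>(count_space I \<Otimes>\<^sub>M N))"
    by (rule nn_integral_distr[OF meas]) (use h in simp)
  also have "\<dots> = (\<integral>\<^sup>+S. \<integral>\<^sup>+\<xi>. h (c S + \<eta> *\<^sub>R \<xi>) \<partial>N \<partial>count_space I)"
    by (rule nn_integral_fst[symmetric, where f="\<lambda>x. h ((\<lambda>(S,\<xi>). c S + \<eta> *\<^sub>R \<xi>) x)", simplified])
      (rule measurable_compose[OF meas h])
  also have "\<dots> = (\<Sum>S\<in>I. \<integral>\<^sup>+\<xi>. h (c S + \<eta> *\<^sub>R \<xi>) \<partial>N)"
    by (rule nn_integral_count_space_finite[OF I])
  finally show ?thesis .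
qed




lemma tv_le:
  assumes s1: "sets M1 = sets \<nu>"
    and bnd: "\<And>B. B \<in> sets \<nu> \<Longrightarrow> ennreal \<bar>measure M1 B - measure M2 B\<bar> \<le> emeasure \<nu> B"
  shows "nn_integral (tv_measure M1 M2) h \<le> nn_integral \<nu> h"
proof -
  define \<mu> where "\<mu> = (\<lambda>A. \<Squnion>{(\<Sum>B\<in>\<P>. ennreal \<bar>measure M1 B - measure M2 B\<bar>) | \<P>.
            finite \<P> \<and> disjoint \<P> \<and> \<P> \<subseteq> sets M1 \<and> \<Union>\<P> = A})"
  have tv: "tv_measure M1 M2 = measure_of (space M1) (sets M1) \<mu>"
    unfolding tv_measure_def \<mu>_def ..
  have sp: "space M1 = space \<nu>" using sets_eq_imp_space_eq[OF s1] .
  have sets_tv: "sets (tv_measure M1 M2) = sets \<nu>"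
    unfolding tv sets_measure_of_conv using sets.space_closed[of M1] sets.sigma_sets_eq[of M1] s1 by simp
  have space_tv: "space (tv_measure M1 M2) = space \<nu>"
    unfolding tv space_measure_of_conv using sp .
  have mu_le: "\<mu> A \<le> emeasure \<nu> A" if A: "A \<in> sets \<nu>" for A
    unfolding \<mu>_def
  proof (rule Sup_least, clarify)
    fix \<P> assume P: "finite \<P>" "disjoint \<P>" "\<P> \<subseteq> sets M1" "A = \<Union>\<P>"
    have "(\<Sum>B\<in>\<P>. ennreal \<bar>measure M1 B - measure M2 B\<bar>) \<le> (\<Sum>B\<in>\<P>. emeasure \<nu> B)"
      using P(3) s1 by (intro sum_mono bnd) auto
    also have "\<dots> = emeasure \<nu> (\<Union>B\<in>\<P>. id B)"
      using sum_emeasure[of id \<P> \<nu>] P s1 by (auto simp: disjoint_family_on_def disjoint_def)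
    finally show "(\<Sum>B\<in>\<P>. ennreal \<bar>measure M1 B - measure M2 B\<bar>) \<le> emeasure \<nu> (\<Union>\<P>)" by simp
  qed
  have "emeasure (tv_measure M1 M2) A \<le> emeasure \<nu> A" for A
  proof (cases "A \<in> sets \<nu>")
    case True
    then show ?thesis unfolding tv emeasure_measure_of_conv using mu_le[OF True] by auto
  next
    case False
    then have "A \<notin> sets (tv_measure M1 M2)" using sets_tv by simp
    then show ?thesis by (simp add: emeasure_notin_sets)
  qed
  then have "tv_measure M1 M2 \<le> \<nu>"
    unfolding le_measure_iff using sets_tv space_tv by (auto simp: le_fun_def)
  then show ?thesis by (rule nn_integral_mono_measure[OF sets_tv])
qed




lemma norm_add_sq: "(norm (a + b :: 'a::real_inner))\<^sup>2 = (norm a)\<^sup>2 + 2 * (a \<bullet> b) + (norm b)\<^sup>2"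
  by (simp add: power2_norm_eq_inner inner_add_left inner_add_right inner_commute)

lemma int_term:
  fixes a :: "'a::euclidean_space"
  assumes N: "prob_space N" and i1: "integrable N (\<lambda>t. t)" and m0: "(\<integral>t. t \<partial>N) = 0"
    and i2: "integrable N (\<lambda>t. (norm t)\<^sup>2)" and psi: "\<psi> \<ge> 0"
  shows "(\<integral>\<^sup>+\<xi>. ennreal (1 + \<psi> * (1 + (norm (a + \<eta> *\<^sub>R \<xi>))\<^sup>2)) \<partial>N)
       = ennreal (1 + \<psi> * (1 + (norm a)\<^sup>2 + \<eta>\<^sup>2 * (\<integral>t. (norm t)\<^sup>2 \<partial>N)))"
proof -
  interpret prob_space N by fact
  have eq: "1 + \<psi> * (1 + (norm (a + \<eta> *\<^sub>R \<xi>))\<^sup>2) =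
     (1 + \<psi> * (1 + (norm a)\<^sup>2)) + (2 * \<psi> * \<eta>) * (a \<bullet> \<xi>) + (\<psi> * \<eta>\<^sup>2) * (norm \<xi>)\<^sup>2" for \<xi>
  proof -
    have "(norm (a + \<eta> *\<^sub>R \<xi>))\<^sup>2 = (norm a)\<^sup>2 + 2 * (a \<bullet> (\<eta> *\<^sub>R \<xi>)) + (norm (\<eta> *\<^sub>R \<xi>))\<^sup>2"
      by (rule norm_add_sq)
    also have "\<dots> = (norm a)\<^sup>2 + 2 * \<eta> * (a \<bullet> \<xi>) + \<eta>\<^sup>2 * (norm \<xi>)\<^sup>2"
      by (simp add: power_mult_distrib)
    finally show ?thesis by (simp add: algebra_simps)
  qed
  have ii: "integrable N (\<lambda>\<xi>. a \<bullet> \<xi>)" using i1 by auto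
  have int: "integrable N (\<lambda>\<xi>. (1 + \<psi> * (1 + (norm a)\<^sup>2)) + (2 * \<psi> * \<eta>) * (a \<bullet> \<xi>) + (\<psi> * \<eta>\<^sup>2) * (norm \<xi>)\<^sup>2)"
    using ii i2 by auto
  have "(\<integral>\<xi>. (1 + \<psi> * (1 + (norm a)\<^sup>2)) + (2 * \<psi> * \<eta>) * (a \<bullet> \<xi>) + (\<psi> * \<eta>\<^sup>2) * (norm \<xi>)\<^sup>2 \<partial>N)
     = (1 + \<psi> * (1 + (norm a)\<^sup>2)) + (2 * \<psi> * \<eta>) * (\<integral>\<xi>. a \<bullet> \<xi> \<partial>N) + (\<psi> * \<eta>\<^sup>2) * (\<integral>\<xi>. (norm \<xi>)\<^sup>2 \<partial>N)"
    using ii i2 by (simp add: prob_space)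
  also have "(\<integral>\<xi>. a \<bullet> \<xi> \<partial>N) = 0" using i1 m0 by simp
  finally have I: "(\<integral>\<xi>. (1 + \<psi> * (1 + (norm a)\<^sup>2)) + (2 * \<psi> * \<eta>) * (a \<bullet> \<xi>) + (\<psi> * \<eta>\<^sup>2) * (norm \<xi>)\<^sup>2 \<partial>N)
     = 1 + \<psi> * (1 + (norm a)\<^sup>2 + \<eta>\<^sup>2 * (\<integral>t. (norm t)\<^sup>2 \<partial>N))" by (simp add: algebra_simps)
  have "(\<integral>\<^sup>+\<xi>. ennreal (1 + \<psi> * (1 + (norm (a + \<eta> *\<^sub>R \<xi>))\<^sup>2)) \<partial>N)
      = (\<integral>\<^sup>+\<xi>. ennreal ((1 + \<psi> * (1 + (norm a)\<^sup>2)) + (2 * \<psi> * \<eta>) * (a \<bullet> \<xi>) + (\<psi> * \<eta>\<^sup>2) * (norm \<xi>)\<^sup>2) \<partial>N)"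
    by (simp only: eq)
  also have "\<dots> = ennreal (\<integral>\<xi>. (1 + \<psi> * (1 + (norm a)\<^sup>2)) + (2 * \<psi> * \<eta>) * (a \<bullet> \<xi>) + (\<psi> * \<eta>\<^sup>2) * (norm \<xi>)\<^sup>2 \<partial>N)"
    by (rule nn_integral_eq_integral[OF int]) (use psi in \<open>auto simp: eq[symmetric]\<close>)
  finally show ?thesis using I by simp
qed




lemma sq2: "(norm (x + y :: 'a::real_normed_vector))\<^sup>2 \<le> 2 * (norm x)\<^sup>2 + 2 * (norm y)\<^sup>2"
proof -
  have "norm (x+y) \<le> norm x + norm y" by (rule norm_triangle_ineq)
  then have "(norm (x+y))\<^sup>2 \<le> (norm x + norm y)\<^sup>2" by (simp add: power_mono)
  also have "\<dots> \<le> 2 * (norm x)\<^sup>2 + 2 * (norm y)\<^sup>2"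
    using zero_le_power2[of "norm x - norm y"] unfolding power2_sum power2_diff by linarith
  finally show ?thesis .
qed

lemma sq2': "(norm (x - y :: 'a::real_normed_vector))\<^sup>2 \<le> 2 * (norm x)\<^sup>2 + 2 * (norm y)\<^sup>2"
  using sq2[of x "-y"] by simp

lemma grad_bound:
  fixes G :: "'a::euclidean_space \<Rightarrow> 'b \<Rightarrow> 'a"
  assumes L: "\<And>\<theta> \<theta>' x. x \<in> \<X> \<Longrightarrow> norm (G \<theta> x - G \<theta>' x) \<le> K1 * norm (\<theta> - \<theta>')"
    and Mx: "\<And>x. x \<in> \<X> \<Longrightarrow> (norm (G \<theta>s x))\<^sup>2 \<le> M"
    and S: "finite S" "card S = b" "b \<ge> 1" and Y: "\<And>i. i \<in> S \<Longrightarrow> Y i \<in> \<X>"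
    and K1: "K1 \<ge> 0"
  shows "(norm (\<theta> - (\<eta> / real b) *\<^sub>R (\<Sum>i\<in>S. G \<theta> (Y i)) - \<theta>s))\<^sup>2
     \<le> (4 + 8 * \<eta>\<^sup>2 * K1\<^sup>2) * (norm (\<theta> - \<theta>hs))\<^sup>2 + (4 + 8 * \<eta>\<^sup>2 * K1\<^sup>2) * (norm (\<theta>s - \<theta>hs))\<^sup>2 + 4 * \<eta>\<^sup>2 * M"
proof -
  define u where "u = \<theta> - \<theta>s"
  define g where "g = (1 / real b) *\<^sub>R (\<Sum>i\<in>S. G \<theta> (Y i))"
  define gs where "gs = (1 / real b) *\<^sub>R (\<Sum>i\<in>S. G \<theta>s (Y i))"
  have bpos: "real b > 0" using S by simp
  have Sne: "S \<noteq> {}" using S by auto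
  then obtain i0 where "i0 \<in> S" by auto
  then have M0: "M \<ge> 0" using Mx[OF Y] by (meson order.trans zero_le_power2)
  have e1: "\<theta> - (\<eta> / real b) *\<^sub>R (\<Sum>i\<in>S. G \<theta> (Y i)) - \<theta>s = u - \<eta> *\<^sub>R g"
    unfolding u_def g_def by (simp add: algebra_simps)
  have "g - gs = (1 / real b) *\<^sub>R (\<Sum>i\<in>S. G \<theta> (Y i) - G \<theta>s (Y i))"
    unfolding g_def gs_def by (simp add: sum_subtractf scaleR_diff_right)
  then have "norm (g - gs) \<le> (1 / real b) * (\<Sum>i\<in>S. norm (G \<theta> (Y i) - G \<theta>s (Y i)))"
    using norm_sum[of "\<lambda>i. G \<theta> (Y i) - G \<theta>s (Y i)" S] bpos by (simp add: divide_right_mono)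
  also have "\<dots> \<le> (1 / real b) * (\<Sum>i\<in>S. K1 * norm u)"
    using L[OF Y] bpos unfolding u_def by (intro mult_left_mono sum_mono) auto
  also have "\<dots> = K1 * norm u" using S bpos by simp
  finally have d1: "norm (g - gs) \<le> K1 * norm u" .
  have "norm gs \<le> (1 / real b) * (\<Sum>i\<in>S. norm (G \<theta>s (Y i)))"
    unfolding gs_def using norm_sum[of "\<lambda>i. G \<theta>s (Y i)" S] bpos by (simp add: divide_right_mono)
  also have "\<dots> \<le> (1 / real b) * (\<Sum>i\<in>S. sqrt M)"
    using Mx[OF Y] bpos by (intro mult_left_mono sum_mono real_le_rsqrt) auto
  also have "\<dots> = sqrt M" using S bpos by simp
  finally have "norm gs \<le> sqrt M" .
  then have d2: "(norm gs)\<^sup>2 \<le> M" using M0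
    by (metis norm_ge_zero power_mono real_sqrt_pow2)
  have d1': "(norm (g - gs))\<^sup>2 \<le> K1\<^sup>2 * (norm u)\<^sup>2"
    using d1 power_mono[OF d1, of 2] by (simp add: power_mult_distrib)
  have "(norm g)\<^sup>2 \<le> 2 * (norm (g - gs))\<^sup>2 + 2 * (norm gs)\<^sup>2"
    using sq2[of "g - gs" gs] by simp
  also have "\<dots> \<le> 2 * (K1\<^sup>2 * (norm u)\<^sup>2) + 2 * M" using d1' d2 by linarith
  finally have g2: "(norm g)\<^sup>2 \<le> 2 * K1\<^sup>2 * (norm u)\<^sup>2 + 2 * M" by simp
  have "(norm (u - \<eta> *\<^sub>R g))\<^sup>2 \<le> 2 * (norm u)\<^sup>2 + 2 * (norm (\<eta> *\<^sub>R g))\<^sup>2" by (rule sq2')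
  also have "(norm (\<eta> *\<^sub>R g))\<^sup>2 = \<eta>\<^sup>2 * (norm g)\<^sup>2" by (simp add: power_mult_distrib)
  also have "2 * (norm u)\<^sup>2 + 2 * (\<eta>\<^sup>2 * (norm g)\<^sup>2) \<le> 2 * (norm u)\<^sup>2 + 2 * (\<eta>\<^sup>2 * (2 * K1\<^sup>2 * (norm u)\<^sup>2 + 2 * M))"
    using g2 by (simp add: mult_left_mono)
  also have "\<dots> = (2 + 4 * \<eta>\<^sup>2 * K1\<^sup>2) * (norm u)\<^sup>2 + 4 * \<eta>\<^sup>2 * M" by (simp add: algebra_simps)
  also have "\<dots> \<le> (2 + 4 * \<eta>\<^sup>2 * K1\<^sup>2) * (2 * (norm (\<theta> - \<theta>hs))\<^sup>2 + 2 * (norm (\<theta>s - \<theta>hs))\<^sup>2) + 4 * \<eta>\<^sup>2 * M"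
  proof -
    have "u = (\<theta> - \<theta>hs) - (\<theta>s - \<theta>hs)" unfolding u_def by simp
    then have "(norm u)\<^sup>2 \<le> 2 * (norm (\<theta> - \<theta>hs))\<^sup>2 + 2 * (norm (\<theta>s - \<theta>hs))\<^sup>2" using sq2' by metis
    then show ?thesis by (intro add_right_mono mult_left_mono) auto
  qed
  also have "\<dots> = (4 + 8 * \<eta>\<^sup>2 * K1\<^sup>2) * (norm (\<theta> - \<theta>hs))\<^sup>2 + (4 + 8 * \<eta>\<^sup>2 * K1\<^sup>2) * (norm (\<theta>s - \<theta>hs))\<^sup>2 + 4 * \<eta>\<^sup>2 * M"
    by (simp add: algebra_simps)
  finally show ?thesis unfolding e1 .
qed




lemma count_T:
  fixes Dif :: "nat set"
  assumes D: "card Dif \<le> 1" "Dif \<subseteq> {1..n}" and b: "1 \<le> b" "b \<le> n"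
  shows "real (card {S\<in>{S. S \<subseteq> {1..n} \<and> card S = b}. S \<inter> Dif \<noteq> {}}) * real n
     \<le> real b * real (card {S. S \<subseteq> {1..n} \<and> card S = b})"
proof -
  have finD: "finite Dif" using D(2) finite_subset by blast
  have cS: "card {S. S \<subseteq> {1..n} \<and> card S = b} = n choose b" using n_subsets[of "{1..n}" b] by simp
  show ?thesis
  proof (cases "Dif = {}")
    case True then show ?thesis by simp
  next
    case False
    then have "card Dif = 1" using D(1) finD by (simp add: card_gt_0_iff le_antisym Suc_leI)
    then obtain i0 where i0: "Dif = {i0}" by (rule card_1_singletonE)
    have i0n: "i0 \<in> {1..n}" using D(2) i0 by auto
    have T: "{S\<in>{S. S \<subseteq> {1..n} \<and> card S = b}. S \<inter> Dif \<noteq> {}}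
        = insert i0 ` {A. A \<subseteq> {1..n} - {i0} \<and> card A = b - 1}"
    proof (intro set_eqI iffI)
      fix S assume S: "S \<in> {S\<in>{S. S \<subseteq> {1..n} \<and> card S = b}. S \<inter> Dif \<noteq> {}}"
      then have "i0 \<in> S" "S \<subseteq> {1..n}" "card S = b" using i0 by auto
      moreover have "finite S" using \<open>S \<subseteq> {1..n}\<close> finite_subset by blast
      ultimately show "S \<in> insert i0 ` {A. A \<subseteq> {1..n} - {i0} \<and> card A = b - 1}"
        by (intro image_eqI[where x="S - {i0}"]) auto
    next
      fix S assume "S \<in> insert i0 ` {A. A \<subseteq> {1..n} - {i0} \<and> card A = b - 1}"
      then obtain A where A: "S = insert i0 A" "A \<subseteq> {1..n} - {i0}" "card A = b - 1" by auto
      have "finite A" using A(2) finite_subset by blast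
      moreover have "i0 \<notin> A" using A(2) by auto
      ultimately have "card S = b" using A b by simp
      then show "S \<in> {S\<in>{S. S \<subseteq> {1..n} \<and> card S = b}. S \<inter> Dif \<noteq> {}}"
        using A i0 i0n by auto
    qed
    have inj: "inj_on (insert i0) {A. A \<subseteq> {1..n} - {i0} \<and> card A = b - 1}"
      by (rule inj_onI) (metis Diff_insert_absorb mem_Collect_eq subset_Diff_insert)
    have cT: "card {S\<in>{S. S \<subseteq> {1..n} \<and> card S = b}. S \<inter> Dif \<noteq> {}} = (n - 1) choose (b - 1)"
      unfolding T card_image[OF inj] using n_subsets[of "{1..n} - {i0}" "b - 1"] i0n by simp
    have "b * (n choose b) = n * ((n - 1) choose (b - 1))"
      using b by (intro times_binomial_minus1_eq) simp
    then have "real ((n - 1) choose (b - 1)) * real n = real b * real (n choose b)"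
      by (metis of_nat_mult mult.commute)
    then show ?thesis unfolding cT cS by simp
  qed
qed


lemma kernel_measure:
  fixes c :: "'i \<Rightarrow> 'a::euclidean_space"
  assumes N: "prob_space N" "sets N = sets borel" and I: "finite I" "I \<noteq> {}"
    and B: "B \<in> sets borel"
  shows "measure (distr (measure_pmf (pmf_of_set I) \<Otimes>\<^sub>M N) borel (\<lambda>(S,\<xi>). c S + \<eta> *\<^sub>R \<xi>)) B
     = (\<Sum>S\<in>I. measure N {\<xi>. c S + \<eta> *\<^sub>R \<xi> \<in> B}) / card I"
proof -
  interpret prob_space N by fact
  have cpos: "real (card I) > 0" using I by (simp add: card_gt_0_iff)
  have "emeasure (distr (measure_pmf (pmf_of_set I) \<Otimes>\<^sub>M N) borel (\<lambda>(S,\<xi>). c S + \<eta> *\<^sub>R \<xi>)) B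
     = (\<Sum>S\<in>I. ennreal (measure N {\<xi>. c S + \<eta> *\<^sub>R \<xi> \<in> B})) / ennreal (real (card I))"
    using kernel_emeasure[OF N I B, of c \<eta>] by (simp add: emeasure_eq_measure ennreal_of_nat_eq_real_of_nat)
  also have "\<dots> = ennreal ((\<Sum>S\<in>I. measure N {\<xi>. c S + \<eta> *\<^sub>R \<xi> \<in> B}) / card I)"
    using cpos by (simp add: divide_ennreal sum_nonneg)
  finally show ?thesis unfolding measure_def by (simp add: sum_nonneg)
qed

lemma div_le:
  assumes "V > 0" "R \<ge> 0" "d \<le> ennreal (R * V)"
  shows "d / ennreal V \<le> ennreal R"
proof -
  have "d / ennreal V \<le> ennreal (R * V) / ennreal V" using assms(3) by (rule divide_right_mono_ennreal)
  also have "\<dots> = ennreal R" using assms by (simp add: divide_ennreal)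
  finally show ?thesis .
qed

theorem lemmaD4:
  fixes f :: "'a::euclidean_space \<Rightarrow> 'b::euclidean_space \<Rightarrow> real"
    and G :: "'a \<Rightarrow> 'b \<Rightarrow> 'a"
    and \<X> :: "'b set"
    and D K1 K2 \<eta> \<psi> :: real
    and N :: "'a measure" and g :: "'a \<Rightarrow> real"
    and n b :: nat
    and X Xh :: "nat \<Rightarrow> 'b"
    and \<theta>s \<theta>hs :: 'a
  assumes grad: "\<And>\<theta> x. x \<in> \<X> \<Longrightarrow> ((\<lambda>t. f t x) has_derivative (\<lambda>h. G \<theta> x \<bullet> h)) (at \<theta>)"
    and bounded_X: "\<forall>x\<in>\<X>. norm x \<le> D"
    and K1_pos: "K1 > 0" and K2_pos: "K2 > 0"
    and A1: "\<And>\<theta> \<theta>' x x'. x \<in> \<X> \<Longrightarrow> x' \<in> \<X> \<Longrightarrow>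
        norm (G \<theta> x - G \<theta>' x') \<le> K1 * norm (\<theta> - \<theta>') + K2 * norm (x - x') * (norm \<theta> + norm \<theta>' + 1)"
    and N_prob: "prob_space N"
    and N_density: "N = density lborel (\<lambda>t. ennreal (g t))"
    and g_meas: "g \<in> borel_measurable borel"
    and g_cont: "continuous_on UNIV g"
    and g_pos: "\<And>t. g t > 0"
    and N_integrable: "integrable N (\<lambda>t. t)"
    and N_mean: "(\<integral>t. t \<partial>N) = 0"
    and N_second: "integrable N (\<lambda>t. (norm t)\<^sup>2)"
    and X_in: "\<And>i. i \<in> {1..n} \<Longrightarrow> X i \<in> \<X>"
    and Xh_in: "\<And>i. i \<in> {1..n} \<Longrightarrow> Xh i \<in> \<X>"
    and differ: "card {i\<in>{1..n}. X i \<noteq> Xh i} \<le> 1"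
    and b_range: "1 \<le> b" "b \<le> n"
    and eta_pos: "\<eta> > 0"
    and psi_pos: "\<psi> > 0"
    and min_s: "\<And>\<theta>. (\<Sum>i=1..n. f \<theta>s (X i)) / real n \<le> (\<Sum>i=1..n. f \<theta> (X i)) / real n"
    and min_hs: "\<And>\<theta>. (\<Sum>i=1..n. f \<theta>hs (Xh i)) / real n \<le> (\<Sum>i=1..n. f \<theta> (Xh i)) / real n"
  shows "(SUP \<theta>. d_psi \<psi> (\<lambda>t. 1 + (norm (t - \<theta>s))\<^sup>2)
                (sgld_kernel n b \<eta> G X N \<theta>) (sgld_kernel n b \<eta> G Xh N \<theta>)
              / ennreal (1 + (norm (\<theta> - \<theta>hs))\<^sup>2))
         \<le> ennreal (2 * real b / real n *
             max (\<psi> * (4 + 8 * \<eta>\<^sup>2 * K1\<^sup>2))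
                 (1 + \<psi> * (1 + \<eta>\<^sup>2 * (\<integral>t. (norm t)\<^sup>2 \<partial>N)
                      + (4 + 8 * \<eta>\<^sup>2 * K1\<^sup>2) * (norm (\<theta>s - \<theta>hs))\<^sup>2
                      + 4 * \<eta>\<^sup>2 * (SUP x\<in>\<X>. (norm (G \<theta>s x))\<^sup>2))))"
proof -
  interpret N: prob_space N by (rule N_prob)
  have setsN: "sets N = sets borel" using N_density by simp
  define SS where "SS = {S. S \<subseteq> {1..n} \<and> card S = b}"
  define Dif where "Dif = {i\<in>{1..n}. X i \<noteq> Xh i}"
  define TT where "TT = {S\<in>SS. S \<inter> Dif \<noteq> {}}"
  define \<sigma>2 where "\<sigma>2 = (\<integral>t. (norm t)\<^sup>2 \<partial>N)"
  define Mx where "Mx = (SUP x\<in>\<X>. (norm (G \<theta>s x))\<^sup>2)"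
  define A where "A = \<psi> * (4 + 8 * \<eta>\<^sup>2 * K1\<^sup>2)"
  define B0 where "B0 = 1 + \<psi> * (1 + \<eta>\<^sup>2 * \<sigma>2 + (4 + 8 * \<eta>\<^sup>2 * K1\<^sup>2) * (norm (\<theta>s - \<theta>hs))\<^sup>2 + 4 * \<eta>\<^sup>2 * Mx)"
  define m where "m = max A B0"
  have finSS: "finite SS" unfolding SS_def by (rule finite_subset[of _ "Pow {1..n}"]) auto
  have SSne: "SS \<noteq> {}"
  proof -
    have "{1..b} \<in> SS" unfolding SS_def using b_range by auto
    then show ?thesis by auto
  qed
  have cSS: "real (card SS) > 0" using finSS SSne by (simp add: card_gt_0_iff)
  have TTSS: "TT \<subseteq> SS" unfolding TT_def by auto
  have finTT: "finite TT" using finite_subset[OF TTSS finSS] .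
  have L: "\<And>\<theta> \<theta>' x. x \<in> \<X> \<Longrightarrow> norm (G \<theta> x - G \<theta>' x) \<le> K1 * norm (\<theta> - \<theta>')"
  proof -
    fix \<theta> \<theta>' x assume x: "x \<in> \<X>"
    show "norm (G \<theta> x - G \<theta>' x) \<le> K1 * norm (\<theta> - \<theta>')" using A1[OF x x, of \<theta> \<theta>'] by simp
  qed
  have X1: "X 1 \<in> \<X>" using X_in b_range by auto
  have bdd: "bdd_above ((\<lambda>x. (norm (G \<theta>s x))\<^sup>2) ` \<X>)"
  proof -
    have "norm (G \<theta>s x) \<le> norm (G \<theta>s (X 1)) + K2 * (2 * D) * (2 * norm \<theta>s + 1)" if x: "x \<in> \<X>" for x
    proof -
      have "norm (G \<theta>s x) \<le> norm (G \<theta>s (X 1)) + norm (G \<theta>s x - G \<theta>s (X 1))"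
        by (metis add.commute diff_add_cancel norm_triangle_ineq)
      also have "norm (G \<theta>s x - G \<theta>s (X 1)) \<le> K2 * norm (x - X 1) * (2 * norm \<theta>s + 1)"
        using A1[OF x X1, of \<theta>s \<theta>s] by simp
      also have "\<dots> \<le> K2 * (2 * D) * (2 * norm \<theta>s + 1)"
      proof -
        have "norm (x - X 1) \<le> norm x + norm (X 1)" by (rule norm_triangle_ineq4)
        also have "\<dots> \<le> 2 * D" using bspec[OF bounded_X x] bspec[OF bounded_X X1] by linarith
        finally show ?thesis using K2_pos by (intro mult_right_mono mult_left_mono) auto
      qed
      finally show ?thesis by simp
    qed
    then have "(norm (G \<theta>s x))\<^sup>2 \<le> (norm (G \<theta>s (X 1)) + K2 * (2 * D) * (2 * norm \<theta>s + 1))\<^sup>2" if "x \<in> \<X>" for x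
      using that by (intro power_mono) auto
    then show ?thesis by (intro bdd_aboveI) auto
  qed
  have Mxb: "\<And>x. x \<in> \<X> \<Longrightarrow> (norm (G \<theta>s x))\<^sup>2 \<le> Mx"
    unfolding Mx_def using bdd by (intro cSUP_upper) auto
  have m_nonneg: "m \<ge> 0" unfolding m_def A_def using psi_pos by (simp add: le_max_iff_disj)
  have key: "d_psi \<psi> (\<lambda>t. 1 + (norm (t - \<theta>s))\<^sup>2)
                (sgld_kernel n b \<eta> G X N \<theta>) (sgld_kernel n b \<eta> G Xh N \<theta>)
         \<le> ennreal (2 * real b / real n * m * (1 + (norm (\<theta> - \<theta>hs))\<^sup>2))" for \<theta>
  proof -
    define cX where "cX = (\<lambda>S. \<theta> - (\<eta> / real b) *\<^sub>R (\<Sum>i\<in>S. G \<theta> (X i)))"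
    define cXh where "cXh = (\<lambda>S. \<theta> - (\<eta> / real b) *\<^sub>R (\<Sum>i\<in>S. G \<theta> (Xh i)))"
    define cc where "cc = (\<lambda>Sc::nat set \<times> bool. if snd Sc then cX (fst Sc) else cXh (fst Sc))"
    define P where "P = sgld_kernel n b \<eta> G X N \<theta>"
    define Ph where "Ph = sgld_kernel n b \<eta> G Xh N \<theta>"
    have P_eq: "P = distr (measure_pmf (pmf_of_set SS) \<Otimes>\<^sub>M N) borel (\<lambda>(S,\<xi>). cX S + \<eta> *\<^sub>R \<xi>)"
      unfolding P_def sgld_kernel_def minibatch_pmf_def SS_def cX_def ..
    have Ph_eq: "Ph = distr (measure_pmf (pmf_of_set SS) \<Otimes>\<^sub>M N) borel (\<lambda>(S,\<xi>). cXh S + \<eta> *\<^sub>R \<xi>)"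
      unfolding Ph_def sgld_kernel_def minibatch_pmf_def SS_def cXh_def ..
    define \<nu> where "\<nu> = scale_measure (ennreal (1 / card SS))
        (distr (count_space (TT \<times> UNIV) \<Otimes>\<^sub>M N) borel (\<lambda>(Sc,\<xi>). cc Sc + \<eta> *\<^sub>R \<xi>))"
    have finTU: "finite (TT \<times> (UNIV :: bool set))" using finTT by simp
    have sets_nu: "sets \<nu> = sets borel" unfolding \<nu>_def by simp
    have sets_P: "sets P = sets \<nu>" unfolding P_eq sets_nu by simp
    define e where "e = (\<lambda>S B. measure N {\<xi>. cX S + \<eta> *\<^sub>R \<xi> \<in> B})"
    define eh where "eh = (\<lambda>S B. measure N {\<xi>. cXh S + \<eta> *\<^sub>R \<xi> \<in> B})"
    have same: "cX S = cXh S" if "S \<in> SS - TT" for S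
    proof -
      have "X i = Xh i" if "i \<in> S" for i using \<open>S \<in> SS - TT\<close> that unfolding SS_def TT_def Dif_def by blast
      then show ?thesis unfolding cX_def cXh_def by simp
    qed
    have bnd: "ennreal \<bar>measure P B - measure Ph B\<bar> \<le> emeasure \<nu> B" if B: "B \<in> sets \<nu>" for B
    proof -
      have B': "B \<in> sets borel" using B sets_nu by simp
      have mP: "measure P B = (\<Sum>S\<in>SS. e S B) / card SS"
        unfolding P_eq e_def by (rule kernel_measure[OF N_prob setsN finSS SSne B'])
      have mPh: "measure Ph B = (\<Sum>S\<in>SS. eh S B) / card SS"
        unfolding Ph_eq eh_def by (rule kernel_measure[OF N_prob setsN finSS SSne B'])
      have "emeasure \<nu> B = ennreal (1 / card SS) * (\<Sum>Sc\<in>TT \<times> UNIV. emeasure N {\<xi>. cc Sc + \<eta> *\<^sub>R \<xi> \<in> B})"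
        unfolding \<nu>_def using mix_emeasure[OF N_prob setsN finTU B'] by simp
      also have "(\<Sum>Sc\<in>TT \<times> UNIV. emeasure N {\<xi>. cc Sc + \<eta> *\<^sub>R \<xi> \<in> B})
          = (\<Sum>S\<in>TT. \<Sum>c\<in>UNIV. emeasure N {\<xi>. cc (S,c) + \<eta> *\<^sub>R \<xi> \<in> B})"
        by (subst sum.cartesian_product) (simp add: case_prod_unfold)
      also have "\<dots> = (\<Sum>S\<in>TT. ennreal (e S B + eh S B))"
        unfolding UNIV_bool cc_def e_def eh_def by (simp add: N.emeasure_eq_measure add.commute)
      also have "\<dots> = ennreal (\<Sum>S\<in>TT. e S B + eh S B)"
        by (rule sum_ennreal) (simp add: e_def eh_def)
      finally have nuB: "emeasure \<nu> B = ennreal ((\<Sum>S\<in>TT. e S B + eh S B) / card SS)"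
        by (simp add: ennreal_mult'' [symmetric] sum_nonneg e_def eh_def)
      have "(\<Sum>S\<in>SS. e S B) - (\<Sum>S\<in>SS. eh S B) = (\<Sum>S\<in>SS. e S B - eh S B)"
        by (simp add: sum_subtractf)
      also have "\<dots> = (\<Sum>S\<in>TT. e S B - eh S B)"
        using same by (intro sum.mono_neutral_right[OF finSS TTSS]) (auto simp: e_def eh_def)
      finally have "\<bar>(\<Sum>S\<in>SS. e S B) - (\<Sum>S\<in>SS. eh S B)\<bar> \<le> (\<Sum>S\<in>TT. \<bar>e S B - eh S B\<bar>)"
        using sum_abs by metis
      also have "\<dots> \<le> (\<Sum>S\<in>TT. e S B + eh S B)"
      proof (intro sum_mono)
        fix S show "\<bar>e S B - eh S B\<bar> \<le> e S B + eh S B"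
          using measure_nonneg[of N "{\<xi>. cX S + \<eta> *\<^sub>R \<xi> \<in> B}"] measure_nonneg[of N "{\<xi>. cXh S + \<eta> *\<^sub>R \<xi> \<in> B}"]
          unfolding e_def eh_def by linarith
      qed
      finally have "\<bar>measure P B - measure Ph B\<bar> \<le> (\<Sum>S\<in>TT. e S B + eh S B) / card SS"
        unfolding mP mPh using cSS by (simp add: diff_divide_distrib[symmetric] divide_right_mono)
      then show ?thesis unfolding nuB by (rule ennreal_leI)
    qed
    define h where "h = (\<lambda>t. ennreal (1 + \<psi> * (1 + (norm (t - \<theta>s))\<^sup>2)))"
    have hm: "h \<in> borel_measurable borel" unfolding h_def by measurable
    have sb: "(\<Sum>Sc\<in>TT \<times> UNIV. \<integral>\<^sup>+\<xi>. h (cc Sc + \<eta> *\<^sub>R \<xi>) \<partial>N) \<le> (\<Sum>Sc\<in>TT \<times> (UNIV::bool set). ennreal (m * (1 + (norm (\<theta> - \<theta>hs))\<^sup>2)))"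
    proof (rule sum_mono)
      fix Sc assume Sc: "Sc \<in> TT \<times> (UNIV :: bool set)"
      define Y where "Y = (if snd Sc then X else Xh)"
      have ccY: "cc Sc = \<theta> - (\<eta> / real b) *\<^sub>R (\<Sum>i\<in>fst Sc. G \<theta> (Y i))"
        unfolding cc_def Y_def cX_def cXh_def by simp
      have S: "fst Sc \<subseteq> {1..n}" "card (fst Sc) = b" proof -
        have "fst Sc \<in> SS" using Sc TTSS by auto
        then show "fst Sc \<subseteq> {1..n}" "card (fst Sc) = b" unfolding SS_def by auto
      qed
      have finS: "finite (fst Sc)" using S(1) finite_subset by blast
      have Yin: "Y i \<in> \<X>" if "i \<in> fst Sc" for i
        using S(1) that X_in Xh_in unfolding Y_def by auto
      have gb: "(norm (cc Sc - \<theta>s))\<^sup>2 \<le> (4 + 8 * \<eta>\<^sup>2 * K1\<^sup>2) * (norm (\<theta> - \<theta>hs))\<^sup>2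
           + (4 + 8 * \<eta>\<^sup>2 * K1\<^sup>2) * (norm (\<theta>s - \<theta>hs))\<^sup>2 + 4 * \<eta>\<^sup>2 * Mx"
        unfolding ccY by (rule grad_bound[OF L Mxb finS S(2) b_range(1) Yin]) (use K1_pos in auto)
      have "(\<integral>\<^sup>+\<xi>. h (cc Sc + \<eta> *\<^sub>R \<xi>) \<partial>N) = (\<integral>\<^sup>+\<xi>. ennreal (1 + \<psi> * (1 + (norm ((cc Sc - \<theta>s) + \<eta> *\<^sub>R \<xi>))\<^sup>2)) \<partial>N)"
        unfolding h_def by (simp add: algebra_simps)
      also have "\<dots> = ennreal (1 + \<psi> * (1 + (norm (cc Sc - \<theta>s))\<^sup>2 + \<eta>\<^sup>2 * \<sigma>2))"
        unfolding \<sigma>2_def by (rule int_term[OF N_prob N_integrable N_mean N_second]) (use psi_pos in auto)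
      also have "\<dots> \<le> ennreal (m * (1 + (norm (\<theta> - \<theta>hs))\<^sup>2))"
      proof (rule ennreal_leI)
        have "1 + \<psi> * (1 + (norm (cc Sc - \<theta>s))\<^sup>2 + \<eta>\<^sup>2 * \<sigma>2) \<le> B0 + A * (norm (\<theta> - \<theta>hs))\<^sup>2"
          using mult_left_mono[OF gb, of \<psi>] psi_pos unfolding A_def B0_def by (simp add: algebra_simps)
        also have "\<dots> \<le> m + m * (norm (\<theta> - \<theta>hs))\<^sup>2"
          unfolding m_def by (intro add_mono mult_right_mono) auto
        finally show "1 + \<psi> * (1 + (norm (cc Sc - \<theta>s))\<^sup>2 + \<eta>\<^sup>2 * \<sigma>2) \<le> m * (1 + (norm (\<theta> - \<theta>hs))\<^sup>2)"
          by (simp add: algebra_simps)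
      qed
      finally show "(\<integral>\<^sup>+\<xi>. h (cc Sc + \<eta> *\<^sub>R \<xi>) \<partial>N) \<le> ennreal (m * (1 + (norm (\<theta> - \<theta>hs))\<^sup>2))" .
    qed
    have "d_psi \<psi> (\<lambda>t. 1 + (norm (t - \<theta>s))\<^sup>2) P Ph = nn_integral (tv_measure P Ph) h"
      unfolding d_psi_def h_def ..
    also have "\<dots> \<le> nn_integral \<nu> h" by (rule tv_le[OF sets_P bnd])
    also have "\<dots> = ennreal (1 / card SS) * (\<Sum>Sc\<in>TT \<times> UNIV. \<integral>\<^sup>+\<xi>. h (cc Sc + \<eta> *\<^sub>R \<xi>) \<partial>N)"
      unfolding \<nu>_def
    proof (subst nn_integral_scale_measure)
      show "h \<in> borel_measurable (distr (count_space (TT \<times> UNIV) \<Otimes>\<^sub>M N) borel (\<lambda>(Sc,\<xi>). cc Sc + \<eta> *\<^sub>R \<xi>))"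
        using hm by simp
      show "ennreal (1 / card SS) * nn_integral (distr (count_space (TT \<times> UNIV) \<Otimes>\<^sub>M N) borel (\<lambda>(Sc,\<xi>). cc Sc + \<eta> *\<^sub>R \<xi>)) h
          = ennreal (1 / card SS) * (\<Sum>Sc\<in>TT \<times> UNIV. \<integral>\<^sup>+\<xi>. h (cc Sc + \<eta> *\<^sub>R \<xi>) \<partial>N)"
        using mix_nn_integral[OF N_prob setsN finTU hm, of cc \<eta>] by simp
    qed
    also have "ennreal (1 / card SS) * (\<Sum>Sc\<in>TT \<times> UNIV. \<integral>\<^sup>+\<xi>. h (cc Sc + \<eta> *\<^sub>R \<xi>) \<partial>N)
       \<le> ennreal (1 / card SS) * (\<Sum>Sc\<in>TT \<times> (UNIV::bool set). ennreal (m * (1 + (norm (\<theta> - \<theta>hs))\<^sup>2)))"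
      by (rule mult_left_mono[OF sb]) simp
    also have "\<dots> = ennreal (2 * real (card TT) / card SS * m * (1 + (norm (\<theta> - \<theta>hs))\<^sup>2))"
      using finTT m_nonneg by (simp add: card_cartesian_product ennreal_mult'' [symmetric] ennreal_of_nat_eq_real_of_nat)
    also have "\<dots> \<le> ennreal (2 * real b / real n * m * (1 + (norm (\<theta> - \<theta>hs))\<^sup>2))"
    proof (rule ennreal_leI, intro mult_right_mono)
      have "real (card TT) * real n \<le> real b * real (card SS)"
        unfolding TT_def SS_def by (rule count_T) (use differ b_range in \<open>auto simp: Dif_def\<close>)
      then have "real (card TT) / card SS \<le> real b / real n"
        using cSS b_range by (simp add: divide_simps)
      then show "2 * real (card TT) / card SS \<le> 2 * real b / real n" by simp
    qed (use m_nonneg in auto)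
    finally show ?thesis unfolding P_def Ph_def .
  qed
  have "(SUP \<theta>. d_psi \<psi> (\<lambda>t. 1 + (norm (t - \<theta>s))\<^sup>2)
                (sgld_kernel n b \<eta> G X N \<theta>) (sgld_kernel n b \<eta> G Xh N \<theta>)
              / ennreal (1 + (norm (\<theta> - \<theta>hs))\<^sup>2)) \<le> ennreal (2 * real b / real n * m)"
  proof (rule SUP_least)
    fix \<theta> :: 'a
    have pos: "0 < 1 + (norm (\<theta> - \<theta>hs))\<^sup>2" by (metis add_pos_nonneg zero_less_one zero_le_power2)
    show "d_psi \<psi> (\<lambda>t. 1 + (norm (t - \<theta>s))\<^sup>2) (sgld_kernel n b \<eta> G X N \<theta>) (sgld_kernel n b \<eta> G Xh N \<theta>) /
        ennreal (1 + (norm (\<theta> - \<theta>hs))\<^sup>2) \<le> ennreal (2 * real b / real n * m)"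
      by (rule div_le[OF pos]) (use key[of \<theta>] m_nonneg in \<open>auto simp: mult.assoc\<close>)
  qed
  then show ?thesis by (simp add: m_def A_def B0_def \<sigma>2_def Mx_def)
qed

end
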